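(* There exist a complete pointed metric space $M$ which is not a Banach space and a real Banach space $Y$ such that $\mathrm{A}(M,Y)$ is not dense in $\mathrm{Lip}_0(M,Y)$.
   Context: Throughout, metric spaces are complete and pointed, with base point $0$. $\mathrm{Lip}_0(M,Y)$ is the Banach space of Lipschitz maps $f:M\to Y$ with $f(0)=0$, normed by $\|f\|=\sup_{p\neq q}\|f(p)-f(q)\|/d(p,q)$. A map $f$ attains its norm toward $y\in Y$ if there is a sequence $(p_n,q_n)$ in $M\times M$ with $p_n\neq q_n$ such that $[f(p_n)-f(q_n)]/d(p_n,q_n)\to y$ and $\|y\|=\|f\|$; $\mathrm{A}(M,Y)$ is the set of $f$ attaining their norm toward some vector. *)

theory Defs
  imports "HOL-Analysis.Analysis"
begin

definition lip0 :: "'a metric \<Rightarrow> 'a \<Rightarrow> 'v::real_normed_vector set \<Rightarrow> ('a \<Rightarrow> 'v) \<Rightarrow> bool" where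
  "lip0 M z Y f \<longleftrightarrow> f ` mspace M \<subseteq> Y \<and> f z = 0 \<and>
     (\<exists>K. \<forall>p\<in>mspace M. \<forall>q\<in>mspace M. norm (f p - f q) \<le> K * mdist M p q)"

definition lipnorm :: "'a metric \<Rightarrow> ('a \<Rightarrow> 'v::real_normed_vector) \<Rightarrow> real" where
  "lipnorm M f = Sup ({0} \<union> {norm (f p - f q) / mdist M p q | p q.
       p \<in> mspace M \<and> q \<in> mspace M \<and> p \<noteq> q})"

definition attains_toward :: "'a metric \<Rightarrow> ('a \<Rightarrow> 'v::real_normed_vector) \<Rightarrow> 'v \<Rightarrow> bool" where
  "attains_toward M f y \<longleftrightarrow> (\<exists>p q :: nat \<Rightarrow> 'a.
      (\<forall>n. p n \<in> mspace M \<and> q n \<in> mspace M \<and> p n \<noteq> q n) \<and>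
      ((\<lambda>n. (f (p n) - f (q n)) /\<^sub>R mdist M (p n) (q n)) \<longlongrightarrow> y) sequentially \<and>
      norm y = lipnorm M f)"

definition Aset :: "'a metric \<Rightarrow> 'a \<Rightarrow> 'v::real_normed_vector set \<Rightarrow> ('a \<Rightarrow> 'v) set" where
  "Aset M z Y = {f. lip0 M z Y f \<and> (\<exists>y. attains_toward M f y)}"

definition A_dense :: "'a metric \<Rightarrow> 'a \<Rightarrow> 'v::real_normed_vector set \<Rightarrow> bool" where
  "A_dense M z Y \<longleftrightarrow> (\<forall>f. lip0 M z Y f \<longrightarrow>
      (\<forall>e>0. \<exists>g\<in>Aset M z Y. lipnorm M (\<lambda>x. f x - g x) < e))"

text \<open>The metric space M "is a Banach space": its point set carries a real vector space
  structure whose induced norm d(x, zero) induces the metric (i.e. the metric is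
  translation invariant and absolutely homogeneous). Completeness is assumed separately.
  This is invariant under isometry, so it says M is isometric to a real Banach space
  (when M is complete).\<close>
definition is_normed_space_metric :: "'a metric \<Rightarrow> bool" where
  "is_normed_space_metric M \<longleftrightarrow> (\<exists>(add :: 'a \<Rightarrow> 'a \<Rightarrow> 'a) (sc :: real \<Rightarrow> 'a \<Rightarrow> 'a) zero.
     let S = mspace M in
     zero \<in> S \<and>
     (\<forall>x\<in>S. \<forall>y\<in>S. add x y \<in> S) \<and>
     (\<forall>a. \<forall>x\<in>S. sc a x \<in> S) \<and>
     (\<forall>x\<in>S. \<forall>y\<in>S. \<forall>w\<in>S. add (add x y) w = add x (add y w)) \<and>
     (\<forall>x\<in>S. \<forall>y\<in>S. add x y = add y x) \<and>
     (\<forall>x\<in>S. add zero x = x) \<and>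
     (\<forall>x\<in>S. \<exists>y\<in>S. add x y = zero) \<and>
     (\<forall>x\<in>S. sc 1 x = x) \<and>
     (\<forall>a b. \<forall>x\<in>S. sc a (sc b x) = sc (a * b) x) \<and>
     (\<forall>a b. \<forall>x\<in>S. sc (a + b) x = add (sc a x) (sc b x)) \<and>
     (\<forall>a. \<forall>x\<in>S. \<forall>y\<in>S. sc a (add x y) = add (sc a x) (sc a y)) \<and>
     (\<forall>x\<in>S. \<forall>y\<in>S. \<forall>w\<in>S. mdist M (add x w) (add y w) = mdist M x y) \<and>
     (\<forall>a. \<forall>x\<in>S. \<forall>y\<in>S. mdist M (sc a x) (sc a y) = \<bar>a\<bar> * mdist M x y))"

end

theory Submission
  imports Defs
begin


definition emb :: "real \<Rightarrow> (real \<Rightarrow>\<^sub>C real)" where "emb p = const_bcontfun p"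
definition SS :: "(real \<Rightarrow>\<^sub>C real) set" where "SS = emb ` {0..1}"
definition MM :: "(real \<Rightarrow>\<^sub>C real) metric" where "MM = submetric euclidean_metric SS"

lemma emb_apply[simp]: "apply_bcontfun (emb p) x = p"
  by (simp add: emb_def)

lemma dist_emb[simp]: "dist (emb p) (emb q) = \<bar>p - q\<bar>"
proof (rule antisym)
  show "dist (emb p) (emb q) \<le> \<bar>p - q\<bar>"
    by (rule dist_bound) (simp add: dist_real_def)
  show "\<bar>p - q\<bar> \<le> dist (emb p) (emb q)"
    using dist_bounded[of "emb p" 0 "emb q"] by (simp add: dist_real_def)
qed

lemma mspace_MM[simp]: "mspace MM = SS" by (simp add: MM_def)
lemma mdist_MM[simp]: "mdist MM = dist" by (simp add: MM_def)

lemma compact_SS: "compact SS"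
proof -
  have "continuous_on {0..1} emb"
    unfolding continuous_on_iff by (metis dist_emb dist_real_def)
  then show ?thesis unfolding SS_def by (intro compact_continuous_image) auto
qed

lemma mcomplete_MM: "mcomplete_of MM"
proof -
  interpret Submetric UNIV dist SS
    by unfold_locales auto
  have "sub.mcomplete"
    by (rule compactin_imp_mcomplete) (simp add: compact_SS)
  then show ?thesis by (simp add: mcomplete_of_def)
qed



lemma SS_cases: assumes "P \<in> SS" obtains p where "P = emb p" "p \<in> {0..1}"
  using assms unfolding SS_def by blast

lemma dist_SS_le1: "P \<in> SS \<Longrightarrow> Q \<in> SS \<Longrightarrow> dist P Q \<le> 1"
  by (auto elim!: SS_cases)

lemma not_normed_MM: "\<not> is_normed_space_metric MM"
proof
  assume "is_normed_space_metric MM"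
  then obtain add sc zero where
    sc: "\<forall>a. \<forall>x\<in>SS. sc a x \<in> SS" and
    hom: "\<forall>a. \<forall>x\<in>SS. \<forall>y\<in>SS. dist (sc a x) (sc a y) = \<bar>a\<bar> * dist x y"
    unfolding is_normed_space_metric_def Let_def by auto
  have e0: "emb 0 \<in> SS" and e1: "emb 1 \<in> SS" unfolding SS_def by auto
  have "dist (sc 2 (emb 0)) (sc 2 (emb 1)) = 2"
    using hom e0 e1 by simp
  moreover have "dist (sc 2 (emb 0)) (sc 2 (emb 1)) \<le> 1"
    using sc e0 e1 dist_SS_le1 by blast
  ultimately show False by simp
qed



definition rho :: "nat \<Rightarrow> real" where "rho j = 1 / (16 * 4 ^ j)"
definition VV :: "nat \<Rightarrow> real set" where
  "VV j = (\<Union>k\<in>{..(2::nat)^j}. {real k / 2^j - rho j <..< real k / 2^j + rho j})"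
definition UU :: "real set" where "UU = (\<Union>j. VV j)"
definition Fm :: "real \<Rightarrow> real" where "Fm p = measure lborel ({0..p} - UU)"

lemma open_UU: "open UU"
  unfolding UU_def VV_def by (intro open_UN ballI) auto

lemma UU_sets[measurable]: "UU \<in> sets borel"
  using open_UU by simp

lemma fin_bounded: "bounded A \<Longrightarrow> emeasure lborel A \<noteq> \<infinity>"
  using emeasure_bounded_finite by (simp add: less_top)

lemma Fm_add: assumes "0 \<le> s" "s \<le> t" shows "Fm t = Fm s + measure lborel ({s<..t} - UU)"
proof -
  have eq: "{0..t} - UU = ({0..s} - UU) \<union> ({s<..t} - UU)" using assms by auto
  have f1: "emeasure lborel ({0..s} - UU) \<noteq> \<infinity>"
    by (rule fin_bounded, rule bounded_subset[of "{0..s}"]) auto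
  have f2: "emeasure lborel ({s<..t} - UU) \<noteq> \<infinity>"
    by (rule fin_bounded, rule bounded_subset[of "{s..t}"]) auto
  show ?thesis unfolding Fm_def eq
    by (rule measure_Union[OF f1 f2]) auto
qed

lemma Fm_piece: assumes "s \<le> t" shows "measure lborel ({s<..t} - UU) \<le> t - s"
proof -
  have f: "emeasure lborel {s<..t} \<noteq> \<infinity>" by (rule fin_bounded, rule bounded_subset[of "{s..t}"]) auto
  have "measure lborel ({s<..t} - UU) \<le> measure lborel {s<..t}"
    by (rule measure_mono_fmeasurable) (use f in \<open>auto simp: fmeasurable_def less_top\<close>)
  also have "measure lborel {s<..t} = t - s" using assms by (simp add: measure_def)
  finally show ?thesis .
qed

lemma Fm_lip: assumes "0 \<le> s" "s \<le> t" shows "0 \<le> Fm t - Fm s" "Fm t - Fm s \<le> t - s"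
  using Fm_add[OF assms] Fm_piece[OF assms(2)] measure_nonneg[of lborel "{s<..t} - UU"] by linarith+

lemma Fm_flat: assumes "0 \<le> s" "s \<le> t" "{s<..t} \<subseteq> UU" shows "Fm t = Fm s"
proof -
  have "{s<..t} - UU = {}" using assms(3) by auto
  then have "measure lborel ({s<..t} - UU) = 0" by (metis measure_empty)
  then show ?thesis using Fm_add[OF assms(1,2)] by linarith
qed

lemma Fm_0[simp]: "Fm 0 = 0"
proof -
  have "{0..0::real} - UU = {0} - UU" by auto
  moreover have "measure lborel ({0::real} - UU) \<le> measure lborel {0::real}"
    by (intro measure_mono_fmeasurable) (auto simp: fmeasurable_def intro!: sets.Diff)
  ultimately show ?thesis unfolding Fm_def by (simp add: measure_nonneg antisym)
qed



lemma VV_sets[measurable]: "VV j \<in> sets borel"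
  unfolding VV_def by (intro borel_open open_UN ballI open_greaterThanLessThan)

lemma bounded_VV: "bounded (VV j)"
  unfolding VV_def by (intro bounded_UN ballI finite_atMost bounded_Ioo)

lemma measure_VV_aux: "((2::real)^j + 1) * (2 * rho j) \<le> 1 / (4 * 2^j)"
proof -
  have a: "(4::real)^j = 2^j * 2^j" by (metis mult_2_right numeral_Bit0 power_mult_distrib)
  have "(2::real)^j \<ge> 1" by simp
  then have "((2::real)^j + 1) * 2 \<le> (2^j + 2^j) * 2" by simp
  then have "((2::real)^j + 1) * 2 / (16 * (2^j * 2^j)) \<le> (2^j + 2^j) * 2 / (16 * (2^j * 2^j))"
    by (intro divide_right_mono) auto
  also have "\<dots> = 1 / (4 * 2^j)" by (simp add: field_simps)
  finally have b: "((2::real)^j + 1) * 2 / (16 * (2^j * 2^j)) \<le> 1 / (4 * 2^j)" .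
  have "((2::real)^j + 1) * (2 * rho j) = ((2::real)^j + 1) * 2 / (16 * (2^j * 2^j))"
    unfolding rho_def a by (simp add: field_simps)
  with b show ?thesis by simp
qed

lemma measure_VV: "measure lborel (VV j) \<le> 1 / (4 * 2^j)"
proof -
  have "measure lborel (VV j) \<le> (\<Sum>k\<in>{..(2::nat)^j}. measure lborel {real k / 2^j - rho j <..< real k / 2^j + rho j})"
    unfolding VV_def by (rule measure_UNION_le) auto
  also have "\<dots> = (\<Sum>k\<in>{..(2::nat)^j}. 2 * rho j)"
    by (rule sum.cong) (auto simp: measure_def rho_def)
  also have "\<dots> = (2^j + 1) * (2 * rho j)" by simp
  also have "\<dots> \<le> 1 / (4 * 2^j)" by (rule measure_VV_aux)
  finally show ?thesis .
qed

lemma emeasure_UU: "emeasure lborel UU \<le> ennreal (1/2)"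
proof -
  have sm: "(\<lambda>j. 1 / (4 * 2^j :: real)) sums (1/2)"
  proof -
    have "(\<lambda>j. (1/2::real)^j) sums (1 / (1 - 1/2))" by (rule geometric_sums) simp
    from sums_mult[OF this, of "1/4"] have "(\<lambda>n. 1/4 * (1/2::real)^n) sums (1/4 * (1 / (1 - 1/2)))" .
    moreover have "(\<lambda>n. 1/4 * (1/2::real)^n) = (\<lambda>j. 1 / (4 * 2^j))"
      by (rule ext) (simp add: power_one_over)
    moreover have "1/4 * (1 / (1 - 1/2)) = (1/2::real)" by simp
    ultimately show ?thesis by simp
  qed
  have "emeasure lborel UU \<le> (\<Sum>j. emeasure lborel (VV j))"
    unfolding UU_def by (rule emeasure_subadditive_countably) (use VV_sets in \<open>auto simp: sets_lborel\<close>)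
  also have "\<dots> \<le> (\<Sum>j. ennreal (1 / (4 * 2^j)))"
  proof (rule suminf_le)
    fix j
    have "emeasure lborel (VV j) = ennreal (measure lborel (VV j))"
    proof (rule emeasure_eq_ennreal_measure)
      show "emeasure lborel (VV j) \<noteq> top" using fin_bounded[OF bounded_VV, of j] by simp
    qed
    then show "emeasure lborel (VV j) \<le> ennreal (1 / (4 * 2^j))"
      using measure_VV[of j] by (simp add: ennreal_leI)
  qed (rule summableI)+
  also have "\<dots> = ennreal (1/2)"
  proof -
    have "(\<Sum>j. ennreal (1 / (4 * 2^j))) = ennreal (\<Sum>j. 1 / (4 * 2^j :: real))"
      by (rule suminf_ennreal2) (auto intro: sums_summable[OF sm])
    also have "(\<Sum>j. 1 / (4 * 2^j :: real)) = 1/2" using sums_unique[OF sm] by simp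
    finally show ?thesis .
  qed
  finally show ?thesis .
qed

lemma Fm_1: "Fm 1 \<ge> 1/2"
proof -
  have "emeasure lborel ({0..1} \<inter> UU) \<le> emeasure lborel UU" by (rule emeasure_mono) auto
  then have e: "emeasure lborel ({0..1} \<inter> UU) \<le> ennreal (1/2)" using emeasure_UU by (rule order_trans)
  have "measure lborel ({0..1} \<inter> UU) \<le> 1/2"
    unfolding measure_def by (rule enn2real_leI) (use e in auto)
  moreover have "Fm 1 = measure lborel {0..1::real} - measure lborel ({0..1} \<inter> UU)"
  proof -
    have "{0..1::real} - UU = {0..1} - ({0..1} \<inter> UU)" by auto
    moreover have "measure lborel ({0..1::real} - ({0..1} \<inter> UU)) = measure lborel {0..1::real} - measure lborel ({0..1} \<inter> UU)"
      by (rule measure_Diff) (auto simp: fin_bounded)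
    ultimately show ?thesis unfolding Fm_def by simp
  qed
  moreover have "measure lborel {0..1::real} = 1" by (simp add: measure_def)
  ultimately show ?thesis by linarith
qed



definition T0 :: "real \<Rightarrow> real" where "T0 x = max 0 (1 - 2 * \<bar>x\<bar>)"
definition T1 :: "real \<Rightarrow> real" where "T1 x = max 0 (min 1 (x - 1))"
definition vec :: "real \<Rightarrow> real \<Rightarrow> real" where
  "vec p x = Fm p * T0 x + 1/4 * T1 x * sin (p * x) / max x 1
     + 1/4 * T1 (- x) * (cos (p * x) - 1) / max (- x) 1"

lemma div_ge1_bound: fixes z m c :: real assumes "1 \<le> m" "\<bar>z\<bar> \<le> c" shows "\<bar>z / m\<bar> \<le> c"
proof -
  have "\<bar>z / m\<bar> = \<bar>z\<bar> / m" using assms(1) by simp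
  also have "\<dots> \<le> \<bar>z\<bar>" using assms(1) mult_left_mono[of 1 m "\<bar>z\<bar>"] by (simp add: divide_le_eq)
  finally show ?thesis using assms(2) by linarith
qed

lemma prod_bound: fixes a b :: real assumes "\<bar>a\<bar> \<le> 1" "\<bar>b\<bar> \<le> c" shows "\<bar>a * b\<bar> \<le> c"
proof -
  have "\<bar>a * b\<bar> = \<bar>a\<bar> * \<bar>b\<bar>" by (rule abs_mult)
  also have "\<dots> \<le> 1 * \<bar>b\<bar>" using assms(1) by (intro mult_right_mono) auto
  finally show ?thesis using assms(2) by linarith
qed

lemma T_bounds: "\<bar>T0 x\<bar> \<le> 1" "\<bar>T1 x\<bar> \<le> 1" "0 \<le> T0 x" "0 \<le> T1 x"
  by (auto simp: T0_def T1_def)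

lemma vec_bound: "\<bar>vec p x\<bar> \<le> \<bar>Fm p\<bar> + 1"
proof -
  have m: "max x 1 \<ge> 1" "max (-x) 1 \<ge> 1" by simp_all
  define A where "A = Fm p * T0 x"
  define B where "B = 1/4 * T1 x * sin (p * x) / max x 1"
  define C where "C = 1/4 * T1 (- x) * (cos (p * x) - 1) / max (- x) 1"
  have hA: "\<bar>A\<bar> \<le> \<bar>Fm p\<bar>"
    unfolding A_def using prod_bound[OF T_bounds(1), of "Fm p" "\<bar>Fm p\<bar>"] by (simp add: mult.commute)
  have hB: "\<bar>B\<bar> \<le> 1/4"
  proof -
    have "\<bar>T1 x * sin (p * x)\<bar> \<le> 1" by (rule prod_bound[OF T_bounds(2) abs_sin_le_one])
    then have "\<bar>T1 x * sin (p * x) / max x 1\<bar> \<le> 1" by (rule div_ge1_bound[OF m(1)])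
    then show ?thesis unfolding B_def by simp
  qed
  have hC: "\<bar>C\<bar> \<le> 1/2"
  proof -
    have "\<bar>cos (p * x) - 1\<bar> \<le> 2" using abs_cos_le_one[of "p*x"] by linarith
    then have "\<bar>T1 (-x) * (cos (p * x) - 1)\<bar> \<le> 2" by (rule prod_bound[OF T_bounds(2)])
    then have "\<bar>T1 (-x) * (cos (p * x) - 1) / max (-x) 1\<bar> \<le> 2" by (rule div_ge1_bound[OF m(2)])
    moreover have "C = 1/4 * (T1 (-x) * (cos (p * x) - 1) / max (-x) 1)" unfolding C_def by simp
    ultimately show ?thesis
    proof -
      assume h: "\<bar>T1 (-x) * (cos (p * x) - 1) / max (-x) 1\<bar> \<le> 2"
        and e: "C = 1/4 * (T1 (-x) * (cos (p * x) - 1) / max (-x) 1)"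
      define W where "W = T1 (-x) * (cos (p * x) - 1) / max (-x) 1"
      have "\<bar>W\<bar> \<le> 2" using h unfolding W_def .
      then have "\<bar>1/4 * W\<bar> \<le> 1/2" by (simp add: abs_mult)
      then show ?thesis using e unfolding W_def by simp
    qed
  qed
  have "vec p x = A + B + C" unfolding vec_def A_def B_def C_def by simp
  then show ?thesis using hA hB hC abs_triangle_ineq[of "A+B" C] abs_triangle_ineq[of A B] by linarith
qed

lemma vec_bcontfun: "vec p \<in> bcontfun"
proof (rule bcontfun_normI)
  have m1: "\<And>x::real. max x 1 \<noteq> 0" "\<And>x::real. max (-x) 1 \<noteq> 0" by (auto simp: max_def)
  show "continuous_on UNIV (vec p)"
    unfolding vec_def T0_def T1_def
    by (intro continuous_intros) (auto simp: m1)
  fix x show "norm (vec p x) \<le> \<bar>Fm p\<bar> + 1" using vec_bound by simp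
qed

definition fv :: "real \<Rightarrow> (real \<Rightarrow>\<^sub>C real)" where "fv p = Bcontfun (vec p)"

lemma fv_apply[simp]: "apply_bcontfun (fv p) x = vec p x"
  unfolding fv_def using vec_bcontfun by (simp add: Bcontfun_inverse)

lemma abs_sin_diff: fixes a b :: real shows "\<bar>sin a - sin b\<bar> \<le> \<bar>a - b\<bar>"
proof -
  have "\<bar>sin a - sin b\<bar> = 2 * \<bar>sin ((a - b) / 2)\<bar> * \<bar>cos ((a + b) / 2)\<bar>"
    by (simp add: sin_diff_sin abs_mult)
  also have "\<dots> \<le> 2 * \<bar>(a - b) / 2\<bar> * 1"
    by (intro mult_mono abs_sin_x_le_abs_x abs_cos_le_one) auto
  finally show ?thesis by simp
qed

lemma abs_cos_diff: fixes a b :: real shows "\<bar>cos a - cos b\<bar> \<le> \<bar>a - b\<bar>"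
proof -
  have "\<bar>cos a - cos b\<bar> = 2 * \<bar>sin ((a + b) / 2)\<bar> * \<bar>sin ((b - a) / 2)\<bar>"
    by (simp add: cos_diff_cos abs_mult)
  also have "\<dots> \<le> 2 * 1 * \<bar>(b - a) / 2\<bar>"
    by (intro mult_mono abs_sin_x_le_abs_x abs_sin_le_one) auto
  finally show ?thesis by simp
qed

lemma scaled_diff_bound:
  fixes p q x D :: real
  assumes "x > 0" "\<bar>D\<bar> \<le> \<bar>p * x - q * x\<bar>" "\<bar>t\<bar> \<le> 1"
  shows "\<bar>1/4 * t * D / x\<bar> \<le> 1/4 * \<bar>p - q\<bar>"
proof -
  have "\<bar>p * x - q * x\<bar> = \<bar>p - q\<bar> * x" using assms(1) by (simp add: left_diff_distrib[symmetric] abs_mult)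
  then have "\<bar>D\<bar> / x \<le> \<bar>p - q\<bar>" using assms by (simp add: divide_le_eq)
  then have "\<bar>D / x\<bar> \<le> \<bar>p - q\<bar>" using assms(1) by simp
  then have "\<bar>t * (D / x)\<bar> \<le> \<bar>p - q\<bar>" by (rule prod_bound[OF assms(3)])
  then show ?thesis by (simp add: abs_mult)
qed



lemma vec_diff_bound:
  assumes "\<bar>Fm p - Fm q\<bar> \<le> a * \<bar>p - q\<bar>"
  shows "\<bar>vec p x - vec q x\<bar> \<le> max a (1/4) * \<bar>p - q\<bar>"
proof -
  have mx: "1/4 * \<bar>p - q\<bar> \<le> max a (1/4) * \<bar>p - q\<bar>" by (intro mult_right_mono) auto
  show ?thesis
  proof (cases "x \<ge> 1")
    case True
    then have z: "T0 x = 0" "T1 (-x) = 0" "max x 1 = x" by (auto simp: T0_def T1_def)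
    have e: "vec p x - vec q x = 1/4 * T1 x * (sin (p * x) - sin (q * x)) / x"
      unfolding vec_def z by (simp add: diff_divide_distrib right_diff_distrib)
    have b: "\<bar>1/4 * T1 x * (sin (p * x) - sin (q * x)) / x\<bar> \<le> 1/4 * \<bar>p - q\<bar>"
      by (rule scaled_diff_bound) (use True abs_sin_diff T_bounds in auto)
    show ?thesis unfolding e using b mx by (rule order_trans)
  next
    case False
    show ?thesis
    proof (cases "x \<le> -1")
      case True
      then have z: "T0 x = 0" "T1 x = 0" "max (-x) 1 = -x" by (auto simp: T0_def T1_def)
      have e: "vec p x - vec q x = 1/4 * T1 (-x) * (cos (p * x) - cos (q * x)) / (-x)"
        unfolding vec_def z by (simp add: diff_divide_distrib right_diff_distrib)
      have b: "\<bar>1/4 * T1 (-x) * (cos (p * x) - cos (q * x)) / (-x)\<bar> \<le> 1/4 * \<bar>p - q\<bar>"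
      proof (rule scaled_diff_bound)
        show "\<bar>cos (p * x) - cos (q * x)\<bar> \<le> \<bar>p * - x - q * - x\<bar>"
          using abs_cos_diff[of "p*x" "q*x"] by simp
      qed (use True T_bounds in auto)
      show ?thesis unfolding e using b mx by (rule order_trans)
    next
      case False
      with \<open>\<not> x \<ge> 1\<close> have z: "T1 x = 0" "T1 (-x) = 0" by (auto simp: T1_def)
      have e: "vec p x - vec q x = T0 x * (Fm p - Fm q)"
        unfolding vec_def z by (simp add: algebra_simps)
      have b: "\<bar>T0 x * (Fm p - Fm q)\<bar> \<le> a * \<bar>p - q\<bar>"
        by (rule prod_bound[OF T_bounds(1) assms])
      have c: "a * \<bar>p - q\<bar> \<le> max a (1/4) * \<bar>p - q\<bar>" by (intro mult_right_mono) auto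
      show ?thesis unfolding e using b c by (rule order_trans)
    qed
  qed
qed

lemma fv_diff_norm:
  assumes "\<bar>Fm p - Fm q\<bar> \<le> a * \<bar>p - q\<bar>"
  shows "norm (fv p - fv q) \<le> max a (1/4) * \<bar>p - q\<bar>"
  by (rule norm_bound) (use vec_diff_bound[OF assms] in simp)

lemma Fm_lip_abs: assumes "p \<in> {0..1}" "q \<in> {0..1}" shows "\<bar>Fm p - Fm q\<bar> \<le> 1 * \<bar>p - q\<bar>"
proof (cases "p \<le> q")
  case True then show ?thesis using Fm_lip[of p q] assms by auto
next
  case False then show ?thesis using Fm_lip[of q p] assms by auto
qed

lemma fv_lip: assumes "p \<in> {0..1}" "q \<in> {0..1}" shows "norm (fv p - fv q) \<le> \<bar>p - q\<bar>"
  using fv_diff_norm[OF Fm_lip_abs[OF assms]] by simp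

lemma fv_slow: assumes "0 \<le> a" "a \<le> b" "{a<..b} \<subseteq> UU" shows "norm (fv b - fv a) \<le> 1/4 * (b - a)"
proof -
  have "\<bar>Fm b - Fm a\<bar> \<le> 0 * \<bar>b - a\<bar>" using Fm_flat[OF assms] by simp
  from fv_diff_norm[OF this] show ?thesis using assms by simp
qed

lemma fv_0: "fv 0 = 0"
  by (rule bcontfun_eqI) (simp add: vec_def)

lemma fv_1_0: "norm (fv 1 - fv 0) \<ge> Fm 1"
proof -
  have "\<bar>apply_bcontfun (fv 1 - fv 0) 0\<bar> \<le> norm (fv 1 - fv 0)" using norm_bounded[of "fv 1 - fv 0" 0] by simp
  moreover have "apply_bcontfun (fv 1 - fv 0) 0 = Fm 1" by (simp add: vec_def T0_def T1_def)
  ultimately show ?thesis by simp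
qed



lemma half_sin: fixes d :: real assumes "d \<noteq> 0" shows "\<bar>sin (d * (pi / \<bar>d\<bar>) / 2)\<bar> = 1"
proof (cases "d > 0")
  case True
  then have "d * (pi / \<bar>d\<bar>) / 2 = pi / 2" by simp
  then show ?thesis by simp
next
  case False
  with assms have "d < 0" by simp
  then have "d * (pi / \<bar>d\<bar>) / 2 = - (pi / 2)" by simp
  then show ?thesis by (simp only: sin_minus) simp
qed

lemma sq_small: fixes a :: real assumes "\<bar>a\<bar> < 1/2" shows "a\<^sup>2 < 1/4"
proof -
  have "\<bar>a\<bar> * \<bar>a\<bar> \<le> \<bar>a\<bar> * (1/2)" using assms by (intro mult_left_mono) auto
  moreover have "\<bar>a\<bar> * (1/2) < 1/4" using assms by linarith
  moreover have "a\<^sup>2 = \<bar>a\<bar> * \<bar>a\<bar>" by (simp add: power2_eq_square)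
  ultimately show ?thesis by linarith
qed

lemma quarter_bound: fixes w A :: real assumes "0 < w" shows "\<bar>A\<bar> \<le> 2 \<Longrightarrow> \<bar>A / (4 * w)\<bar> \<le> 1 / (2 * w)"
proof -
  assume a: "\<bar>A\<bar> \<le> 2"
  have "\<bar>A / (4 * w)\<bar> = \<bar>A\<bar> / (4 * w)" using assms by (simp add: abs_divide)
  also have "\<dots> \<le> 2 / (4 * w)" using a assms by (intro divide_right_mono) auto
  also have "\<dots> = 1 / (2 * w)" by simp
  finally show ?thesis .
qed

lemma div_pos_mono: fixes V B l :: real assumes "0 < l" "\<bar>V\<bar> \<le> B" shows "\<bar>V / l\<bar> \<le> B / l"
proof -
  have "\<bar>V / l\<bar> = \<bar>V\<bar> / l" using assms(1) by (simp add: abs_divide)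
  also have "\<dots> \<le> B / l" using assms by (intro divide_right_mono) auto
  finally show ?thesis .
qed

lemma div_pi_lower: fixes A :: real assumes "1 \<le> \<bar>A\<bar>" shows "1 / (4 * pi) \<le> \<bar>A / (4 * pi)\<bar>"
proof -
  have "\<bar>A / (4 * pi)\<bar> = \<bar>A\<bar> / (4 * pi)" using pi_gt_zero by (simp add: abs_divide)
  moreover have "1 / (4 * pi) \<le> \<bar>A\<bar> / (4 * pi)" using assms pi_gt_zero by (intro divide_right_mono) auto
  ultimately show ?thesis by simp
qed

lemma vec_w: assumes "w \<ge> 2" shows "vec r w = sin (r * w) / (4 * w)" "vec r (-w) = (cos (r * w) - 1) / (4 * w)"
proof -
  have z: "T0 w = 0" "T1 w = 1" "T1 (-w) = 0" "max w 1 = w" "T0 (-w) = 0" "max (- (- w)) 1 = w" "T1 (- (- w)) = 1"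
    using assms by (auto simp: T0_def T1_def)
  show "vec r w = sin (r * w) / (4 * w)" unfolding vec_def z by simp
  show "vec r (-w) = (cos (r * w) - 1) / (4 * w)" unfolding vec_def z by simp
qed

lemma core:
  fixes s t s' t' :: real
  assumes st: "s \<noteq> t" and st': "s' \<noteq> t'" and l1: "\<bar>s' - t'\<bar> \<le> 1" and l8: "8 * \<bar>s' - t'\<bar> \<le> \<bar>s - t\<bar>"
  shows "\<exists>x. 1/20 \<le> \<bar>(vec s x - vec t x) / \<bar>s - t\<bar> - (vec s' x - vec t' x) / \<bar>s' - t'\<bar>\<bar>"
proof -
  define l' where "l' = \<bar>s' - t'\<bar>"
  define l where "l = \<bar>s - t\<bar>"
  have l'0: "l' > 0" using st' by (simp add: l'_def)
  have l0: "l > 0" using st by (simp add: l_def)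
  define w where "w = pi / l'"
  have wpi: "w \<ge> pi" unfolding w_def using l'0 l1 pi_gt_zero
    by (simp add: l'_def le_divide_eq)
  have w2: "w \<ge> 2" using wpi pi_ge_two by linarith
  have w0: "w > 0" using w2 by simp
  have wl': "w * l' = pi" unfolding w_def using l'0 by simp
  have wl: "w * l \<ge> 8 * pi"
  proof -
    have "w * l \<ge> w * (8 * l')" using l8 w0 by (intro mult_left_mono) (auto simp: l_def l'_def)
    then show ?thesis using wl' by (simp add: algebra_simps)
  qed
  define \<theta> where "\<theta> = (s' * w + t' * w) / 2"
  have hs: "(s' * w - t' * w) / 2 = (s' - t') * (pi / \<bar>s' - t'\<bar>) / 2"
    unfolding w_def l'_def using st' by (simp add: field_simps)
  have hs1: "\<bar>sin ((s' * w - t' * w) / 2)\<bar> = 1" unfolding hs using half_sin st' by simp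
  have hc1: "\<bar>sin ((t' * w - s' * w) / 2)\<bar> = 1"
  proof -
    have "(t' * w - s' * w) / 2 = - ((s' * w - t' * w) / 2)" by (simp add: field_simps)
    then show ?thesis using hs1 by (simp only: sin_minus abs_minus_cancel)
  qed
  have Rs': "(vec s' w - vec t' w) / l' = (sin (s' * w) - sin (t' * w)) / (4 * pi)"
  proof -
    have "(vec s' w - vec t' w) / l' = (sin (s' * w) / (4 * w) - sin (t' * w) / (4 * w)) / l'"
      by (simp only: vec_w[OF w2])
    also have "\<dots> = (sin (s' * w) - sin (t' * w)) / (4 * (w * l'))" using w0 l'0 by (simp add: field_simps)
    finally show ?thesis by (simp only: wl')
  qed
  have Rc': "(vec s' (-w) - vec t' (-w)) / l' = (cos (s' * w) - cos (t' * w)) / (4 * pi)"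
  proof -
    have "(vec s' (-w) - vec t' (-w)) / l' = ((cos (s' * w) - 1) / (4 * w) - (cos (t' * w) - 1) / (4 * w)) / l'"
      by (simp only: vec_w[OF w2])
    also have "\<dots> = (cos (s' * w) - cos (t' * w)) / (4 * (w * l'))" using w0 l'0 by (simp add: field_simps)
    finally show ?thesis by (simp only: wl')
  qed
  have As': "\<bar>sin (s' * w) - sin (t' * w)\<bar> = 2 * \<bar>cos \<theta>\<bar>"
    unfolding sin_diff_sin \<theta>_def abs_mult using hs1 by simp
  have Ac': "\<bar>cos (s' * w) - cos (t' * w)\<bar> = 2 * \<bar>sin \<theta>\<bar>"
    unfolding cos_diff_cos \<theta>_def abs_mult using hc1 by simp
  have big: "\<bar>(vec s x - vec t x) / l\<bar> \<le> 1 / (16 * pi)" if "x = w \<or> x = -w" for x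
  proof -
    have "\<bar>vec s x - vec t x\<bar> \<le> 1 / (2 * w)"
    proof (cases "x = w")
      case True
      have e: "vec s x - vec t x = (sin (s * w) - sin (t * w)) / (4 * w)"
        unfolding True vec_w[OF w2] by (rule diff_divide_distrib[symmetric])
      have b: "\<bar>sin (s * w) - sin (t * w)\<bar> \<le> 2"
        using abs_sin_le_one[of "s*w"] abs_sin_le_one[of "t*w"] by linarith
      show ?thesis unfolding e by (rule quarter_bound[OF w0 b])
    next
      case False
      then have "x = -w" using that by simp
      have e: "vec s x - vec t x = (cos (s * w) - cos (t * w)) / (4 * w)"
        unfolding \<open>x = -w\<close> vec_w[OF w2] by (simp only: diff_divide_distrib[symmetric]) simp
      have b: "\<bar>cos (s * w) - cos (t * w)\<bar> \<le> 2"
        using abs_cos_le_one[of "s*w"] abs_cos_le_one[of "t*w"] by linarith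
      show ?thesis unfolding e by (rule quarter_bound[OF w0 b])
    qed
    then have "\<bar>(vec s x - vec t x) / l\<bar> \<le> 1 / (2 * w) / l"
      by (rule div_pos_mono[OF l0])
    also have "\<dots> = 1 / (2 * (w * l))" by simp
    also have "\<dots> \<le> 1 / (2 * (8 * pi))"
    proof (rule divide_left_mono)
      show "2 * (8 * pi) \<le> 2 * (w * l)" using wl by linarith
      have "0 < w * l" using w0 l0 by simp
      then show "0 < 2 * (w * l) * (2 * (8 * pi))" using pi_gt_zero w0 l0 by (intro mult_pos_pos) auto
    qed simp
    finally show ?thesis by simp
  qed
  have pi_le: "pi \<le> 3.2" using pi_approx by simp
  have key: "3 / (16 * pi) \<ge> 1/20" using pi_le pi_gt_zero by (simp add: field_simps)
  have "\<bar>cos \<theta>\<bar> \<ge> 1/2 \<or> \<bar>sin \<theta>\<bar> \<ge> 1/2"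
  proof (rule ccontr)
    assume "\<not> ?thesis"
    then have "\<bar>cos \<theta>\<bar> < 1/2" "\<bar>sin \<theta>\<bar> < 1/2" by auto
    then have "(cos \<theta>)\<^sup>2 < 1/4" "(sin \<theta>)\<^sup>2 < 1/4" using sq_small by blast+
    then show False using sin_cos_squared_add[of \<theta>] by linarith
  qed
  then show ?thesis
  proof
    assume c: "\<bar>cos \<theta>\<bar> \<ge> 1/2"
    have "\<bar>(vec s' w - vec t' w) / l'\<bar> \<ge> 1 / (4 * pi)"
      unfolding Rs' by (rule div_pi_lower) (use As' c in linarith)
    moreover have "\<bar>(vec s w - vec t w) / l\<bar> \<le> 1 / (16 * pi)" using big by simp
    moreover have "1 / (4 * pi) - 1 / (16 * pi) = 3 / (16 * pi)" by (simp add: field_simps)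
    ultimately have "1/20 \<le> \<bar>(vec s w - vec t w) / l - (vec s' w - vec t' w) / l'\<bar>"
      using key by linarith
    then show ?thesis unfolding l_def l'_def by blast
  next
    assume c: "\<bar>sin \<theta>\<bar> \<ge> 1/2"
    have "\<bar>(vec s' (-w) - vec t' (-w)) / l'\<bar> \<ge> 1 / (4 * pi)"
      unfolding Rc' by (rule div_pi_lower) (use Ac' c in linarith)
    moreover have "\<bar>(vec s (-w) - vec t (-w)) / l\<bar> \<le> 1 / (16 * pi)" using big by simp
    moreover have "1 / (4 * pi) - 1 / (16 * pi) = 3 / (16 * pi)" by (simp add: field_simps)
    ultimately have "1/20 \<le> \<bar>(vec s (-w) - vec t (-w)) / l - (vec s' (-w) - vec t' (-w)) / l'\<bar>"
      using key by linarith
    then show ?thesis unfolding l_def l'_def by blast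
  qed
qed



lemma rho_le: "rho j \<le> 1 / 2^j"
proof -
  have "(2::real)^j \<le> 4^j" by (intro power_mono) auto
  moreover have "(0::real) \<le> 4^j" by simp
  ultimately have "(2::real)^j \<le> 16 * 4^j" by linarith
  then show ?thesis unfolding rho_def by (intro divide_left_mono) auto
qed

lemma rho_pos: "rho j > 0" unfolding rho_def by simp

lemma gap:
  assumes "(\<delta>::real) > 0"
  obtains \<gamma> where "\<gamma> > 0"
    "\<And>s t. 0 \<le> s \<Longrightarrow> t \<le> 1 \<Longrightarrow> s + \<delta> \<le> t \<Longrightarrow> \<exists>a b. s \<le> a \<and> a + \<gamma> \<le> b \<and> b \<le> t \<and> {a<..b} \<subseteq> UU"
proof -
  obtain j where j: "(1/2::real)^j < \<delta>/4" using real_arch_pow_inv[of "\<delta>/4" "1/2"] assms by auto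
  define N where "N = (2::real)^j"
  have N0: "N > 0" unfolding N_def by simp
  have jN: "1 / N < \<delta> / 4" using j unfolding N_def by (simp add: power_one_over)
  have rN: "rho j \<le> 1 / N" using rho_le unfolding N_def .
  have "\<exists>a b. s \<le> a \<and> a + rho j \<le> b \<and> b \<le> t \<and> {a<..b} \<subseteq> UU"
    if s0: "0 \<le> s" and t1: "t \<le> 1" and st: "s + \<delta> \<le> t" for s t
  proof -
    define c where "c = \<lceil>s * N\<rceil>"
    have "0 \<le> s * N" using s0 N0 by simp
    then have c0: "0 \<le> c" unfolding c_def by linarith
    define k where "k = nat c + 1"
    have kc: "real k = of_int c + 1" unfolding k_def using c0 by simp
    define m where "m = real k / N"
    have c1: "s * N \<le> of_int c" "of_int c \<le> s * N + 1" unfolding c_def by simp_all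
    have m1: "s + 1 / N \<le> m"
    proof -
      have "(s + 1/N) * N = s * N + 1" using N0 by (simp add: field_simps)
      also have "\<dots> \<le> real k" using c1 kc by simp
      finally show ?thesis unfolding m_def using N0 by (simp add: le_divide_eq)
    qed
    have m2: "m \<le> s + 2 / N"
    proof -
      have "(s + 2/N) * N = s * N + 2" using N0 by (simp add: field_simps)
      then have "real k \<le> (s + 2/N) * N" using c1 kc by linarith
      then show ?thesis unfolding m_def using N0 by (simp add: divide_le_eq)
    qed
    define a where "a = m - rho j / 2"
    define b where "b = m + rho j / 2"
    have "s \<le> a" unfolding a_def using m1 rN rho_pos[of j] by linarith
    moreover have "a + rho j \<le> b" unfolding a_def b_def by simp
    moreover have bt: "b \<le> t"
    proof -
      have "2 / N = 2 * (1 / N)" by simp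
      then show ?thesis unfolding b_def using m2 rN jN st assms by linarith
    qed
    moreover have "{a<..b} \<subseteq> UU"
    proof -
      have "m \<le> 1" using bt t1 rho_pos[of j] unfolding b_def by linarith
      then have "real k \<le> N" unfolding m_def using N0 by (simp add: divide_le_eq)
      then have kle: "k \<le> 2^j" unfolding N_def by (metis of_nat_le_iff of_nat_numeral of_nat_power)
      have "{a<..b} \<subseteq> {real k / 2^j - rho j <..< real k / 2^j + rho j}"
        unfolding a_def b_def m_def N_def using rho_pos[of j] by auto
      also have "\<dots> \<subseteq> VV j" unfolding VV_def using kle by blast
      also have "\<dots> \<subseteq> UU" unfolding UU_def by blast
      finally show ?thesis .
    qed
    ultimately show ?thesis by blast
  qed
  then show ?thesis using that[of "rho j"] rho_pos by blast
qed



lemma lipnorm_ratio_MM: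
  fixes f :: "(real \<Rightarrow>\<^sub>C real) \<Rightarrow> (real \<Rightarrow>\<^sub>C real)"
  assumes K: "\<forall>P\<in>SS. \<forall>Q\<in>SS. norm (f P - f Q) \<le> K * dist P Q"
    and PQ: "P \<in> SS" "Q \<in> SS" "P \<noteq> Q"
  shows "norm (f P - f Q) / dist P Q \<le> lipnorm MM f"
  unfolding lipnorm_def
proof (rule cSup_upper)
  show "norm (f P - f Q) / dist P Q \<in> {0} \<union> {norm (f p - f q) / mdist MM p q |p q. p \<in> mspace MM \<and> q \<in> mspace MM \<and> p \<noteq> q}"
    using PQ by auto
  show "bdd_above ({0} \<union> {norm (f p - f q) / mdist MM p q |p q. p \<in> mspace MM \<and> q \<in> mspace MM \<and> p \<noteq> q})"
  proof (rule bdd_aboveI)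
    fix r assume "r \<in> {0} \<union> {norm (f p - f q) / mdist MM p q |p q. p \<in> mspace MM \<and> q \<in> mspace MM \<and> p \<noteq> q}"
    then show "r \<le> max 0 K"
    proof
      assume "r \<in> {0}" then show ?thesis by simp
    next
      assume "r \<in> {norm (f p - f q) / mdist MM p q |p q. p \<in> mspace MM \<and> q \<in> mspace MM \<and> p \<noteq> q}"
      then obtain p q where r: "r = norm (f p - f q) / dist p q" "p \<in> SS" "q \<in> SS" "p \<noteq> q" by auto
      then have "dist p q > 0" by simp
      then have "r \<le> K" using K r by (simp add: divide_le_eq)
      then show ?thesis by simp
    qed
  qed
qed

lemma lipnorm_bound_MM:
  fixes f :: "(real \<Rightarrow>\<^sub>C real) \<Rightarrow> (real \<Rightarrow>\<^sub>C real)"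
  assumes K: "\<forall>P\<in>SS. \<forall>Q\<in>SS. norm (f P - f Q) \<le> K * dist P Q"
    and PQ: "P \<in> SS" "Q \<in> SS"
  shows "norm (f P - f Q) \<le> lipnorm MM f * dist P Q"
proof (cases "P = Q")
  case True then show ?thesis by simp
next
  case False
  then have "dist P Q > 0" by simp
  with lipnorm_ratio_MM[OF K PQ False] show ?thesis by (simp add: divide_le_eq mult.commute)
qed

definition f0 :: "(real \<Rightarrow>\<^sub>C real) \<Rightarrow> (real \<Rightarrow>\<^sub>C real)" where "f0 P = fv (apply_bcontfun P 0)"

lemma f0_emb[simp]: "f0 (emb a) = fv a" by (simp add: f0_def)

lemma emb_SS: "a \<in> {0..1} \<Longrightarrow> emb a \<in> SS" unfolding SS_def by blast

lemma SS_emb_apply: "P \<in> SS \<Longrightarrow> P = emb (apply_bcontfun P 0) \<and> apply_bcontfun P 0 \<in> {0..1}"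
  by (auto elim!: SS_cases)



lemma no_attain:
  fixes g :: "(real \<Rightarrow>\<^sub>C real) \<Rightarrow> (real \<Rightarrow>\<^sub>C real)"
  assumes glip: "\<forall>P\<in>SS. \<forall>Q\<in>SS. norm (g P - g Q) \<le> K * dist P Q"
    and hb: "\<forall>P\<in>SS. \<forall>Q\<in>SS. norm ((f0 P - g P) - (f0 Q - g Q)) \<le> 1/100 * dist P Q"
    and att: "attains_toward MM g y"
  shows False
proof -
  define L where "L = lipnorm MM g"
  define G where "G a = g (emb a)" for a
  have gL: "norm (G a - G b) \<le> L * \<bar>a - b\<bar>" if "a \<in> {0..1}" "b \<in> {0..1}" for a b
    using lipnorm_bound_MM[OF glip emb_SS[OF that(1)] emb_SS[OF that(2)]] unfolding L_def G_def by simp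
  have hG: "norm ((fv a - G a) - (fv b - G b)) \<le> 1/100 * \<bar>a - b\<bar>" if "a \<in> {0..1}" "b \<in> {0..1}" for a b
    using hb[rule_format, OF emb_SS[OF that(1)] emb_SS[OF that(2)]] unfolding G_def by simp
  have fg1: "norm (fv a - fv b) \<le> norm (G a - G b) + 1/100 * \<bar>a - b\<bar>" if "a \<in> {0..1}" "b \<in> {0..1}" for a b
  proof -
    have "fv a - fv b = (G a - G b) + ((fv a - G a) - (fv b - G b))" by simp
    then have "norm (fv a - fv b) \<le> norm (G a - G b) + norm ((fv a - G a) - (fv b - G b))"
      by (metis norm_triangle_ineq)
    then show ?thesis using hG[OF that] by linarith
  qed
  have fg2: "norm (G a - G b) \<le> norm (fv a - fv b) + 1/100 * \<bar>a - b\<bar>" if "a \<in> {0..1}" "b \<in> {0..1}" for a b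
  proof -
    have "G a - G b = (fv a - fv b) - ((fv a - G a) - (fv b - G b))" by simp
    then have "norm (G a - G b) \<le> norm (fv a - fv b) + norm ((fv a - G a) - (fv b - G b))"
      by (metis norm_triangle_ineq4)
    then show ?thesis using hG[OF that] by linarith
  qed
  have Lbig: "L \<ge> 1/2 - 1/100"
  proof -
    have "Fm 1 \<le> norm (fv 1 - fv 0)" by (rule fv_1_0)
    also have "\<dots> \<le> norm (G 1 - G 0) + 1/100 * \<bar>1 - 0\<bar>" by (rule fg1) auto
    also have "\<dots> \<le> L * \<bar>1 - 0\<bar> + 1/100 * \<bar>1 - 0\<bar>" using gL[of 1 0] by simp
    finally show ?thesis using Fm_1 by simp
  qed
  have slow: "norm (G b - G a) \<le> (1/4 + 1/100) * (b - a)" if "0 \<le> a" "a \<le> b" "b \<le> 1" "{a<..b} \<subseteq> UU" for a b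
  proof -
    have "norm (G b - G a) \<le> norm (fv b - fv a) + 1/100 * \<bar>b - a\<bar>" by (rule fg2) (use that in auto)
    also have "\<dots> \<le> 1/4 * (b - a) + 1/100 * (b - a)"
    proof -
      have "\<bar>b - a\<bar> = b - a" using that by simp
      then show ?thesis using fv_slow[OF that(1,2,4)] by linarith
    qed
    finally show ?thesis by (simp add: algebra_simps)
  qed
  have decomp: "norm (G t - G s) \<le> L * (t - s) - (L - 26/100) * \<gamma>"
    if "0 \<le> s" "s \<le> a" "a + \<gamma> \<le> b" "b \<le> t" "t \<le> 1" "{a<..b} \<subseteq> UU" "0 \<le> \<gamma>" for s t a b \<gamma>
  proof -
    have in01: "s \<in> {0..1}" "a \<in> {0..1}" "b \<in> {0..1}" "t \<in> {0..1}" using that by auto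
    have eq3: "G t - G s = (G t - G b) + (G b - G a) + (G a - G s)" by simp
    have "norm (G t - G s) \<le> norm (G t - G b) + norm (G b - G a) + norm (G a - G s)"
      using arg_cong[where f=norm, OF eq3] norm_triangle_ineq[of "(G t - G b) + (G b - G a)" "G a - G s"]
        norm_triangle_ineq[of "G t - G b" "G b - G a"] by linarith
    moreover have "norm (G t - G b) \<le> L * (t - b)" using gL[OF in01(4,3)] that by simp
    moreover have "norm (G a - G s) \<le> L * (a - s)" using gL[OF in01(2,1)] that by simp
    moreover have "norm (G b - G a) \<le> 26/100 * (b - a)" using slow[of a b] that by simp
    moreover have "L * (t - b) + 26/100 * (b - a) + L * (a - s) = L * (t - s) - (L - 26/100) * (b - a)"
      by (simp add: algebra_simps)
    moreover have "(L - 26/100) * \<gamma> \<le> (L - 26/100) * (b - a)"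
      using Lbig that by (intro mult_left_mono) auto
    ultimately show ?thesis by linarith
  qed
  have ratio: "\<exists>\<kappa>>0. \<forall>a\<in>{0..1}. \<forall>b\<in>{0..1}. \<bar>a - b\<bar> \<ge> \<delta> \<longrightarrow> norm (G a - G b) / \<bar>a - b\<bar> \<le> L - \<kappa>"
    if \<delta>pos: "\<delta> > 0" for \<delta>
  proof -
    obtain \<gamma> where \<gamma>0: "\<gamma> > 0" and gp: "\<And>s t. 0 \<le> s \<Longrightarrow> t \<le> 1 \<Longrightarrow> s + \<delta> \<le> t \<Longrightarrow> \<exists>a b. s \<le> a \<and> a + \<gamma> \<le> b \<and> b \<le> t \<and> {a<..b} \<subseteq> UU"
      using gap[OF \<delta>pos] by blast
    define \<kappa> where "\<kappa> = (L - 26/100) * \<gamma>"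
    have \<kappa>0: "\<kappa> > 0" unfolding \<kappa>_def using Lbig \<gamma>0 by simp
    have one: "norm (G t - G s) / (t - s) \<le> L - \<kappa>" if st: "0 \<le> s" "t \<le> 1" "s + \<delta> \<le> t" for s t
    proof -
      obtain a b where ab: "s \<le> a" "a + \<gamma> \<le> b" "b \<le> t" "{a<..b} \<subseteq> UU" using gp[OF st] by blast
      have ts: "t - s > 0" "t - s \<le> 1" using st \<open>\<delta> > 0\<close> by auto
      have "norm (G t - G s) \<le> L * (t - s) - \<kappa>"
        unfolding \<kappa>_def by (rule decomp) (use st ab \<gamma>0 in auto)
      also have "\<dots> \<le> L * (t - s) - \<kappa> * (t - s)" using \<kappa>0 ts mult_left_mono[of "t - s" 1 \<kappa>] by simp
      also have "\<dots> = (L - \<kappa>) * (t - s)" by (simp add: algebra_simps)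
      finally show ?thesis using ts by (simp add: divide_le_eq)
    qed
    show ?thesis
    proof (intro exI[of _ \<kappa>] conjI \<kappa>0 ballI impI)
      fix a b assume a: "a \<in> {0..1}" and b: "b \<in> {0..1}" and d: "\<delta> \<le> \<bar>a - b\<bar>"
      show "norm (G a - G b) / \<bar>a - b\<bar> \<le> L - \<kappa>"
      proof (cases "a \<le> b")
        case True
        then have "\<bar>a - b\<bar> = b - a" by simp
        moreover have "norm (G a - G b) = norm (G b - G a)" by (rule norm_minus_commute)
        ultimately show ?thesis using one[of a b] a b d True by simp
      next
        case False
        then have "\<bar>a - b\<bar> = a - b" by simp
        then show ?thesis using one[of b a] a b d False by simp
      qed
    qed
  qed
  from att obtain p q where pq: "\<And>n. p n \<in> SS \<and> q n \<in> SS \<and> p n \<noteq> q n"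
    and lim: "((\<lambda>n. (g (p n) - g (q n)) /\<^sub>R dist (p n) (q n)) \<longlongrightarrow> y) sequentially"
    and ny: "norm y = L"
    unfolding attains_toward_def L_def by auto
  define a where "a n = apply_bcontfun (p n) 0" for n
  define b where "b n = apply_bcontfun (q n) 0" for n
  have pa: "p n = emb (a n)" "a n \<in> {0..1}" for n using SS_emb_apply pq unfolding a_def by blast+
  have qb: "q n = emb (b n)" "b n \<in> {0..1}" for n using SS_emb_apply pq unfolding b_def by blast+
  have ab: "a n \<noteq> b n" for n using pq[of n] pa(1)[of n] qb(1)[of n] by auto
  define v where "v n = (G (a n) - G (b n)) /\<^sub>R \<bar>a n - b n\<bar>" for n
  have v_eq: "(g (p n) - g (q n)) /\<^sub>R dist (p n) (q n) = v n" for n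
    unfolding v_def G_def using pa qb by simp
  have limv: "v \<longlonglongrightarrow> y" using lim unfolding v_eq .
  have nv: "norm (v n) = norm (G (a n) - G (b n)) / \<bar>a n - b n\<bar>" for n
    unfolding v_def by (simp add: divide_inverse mult.commute)
  have limn: "(\<lambda>n. norm (v n)) \<longlonglongrightarrow> L" using tendsto_norm[OF limv] ny by simp
  have small: "\<forall>\<^sub>F n in sequentially. \<bar>a n - b n\<bar> < \<delta>" if \<delta>pos: "\<delta> > 0" for \<delta>
  proof -
    obtain \<kappa> where \<kappa>0: "\<kappa> > 0" and rb: "\<forall>a\<in>{0..1}. \<forall>b\<in>{0..1}. \<bar>a - b\<bar> \<ge> \<delta> \<longrightarrow> norm (G a - G b) / \<bar>a - b\<bar> \<le> L - \<kappa>"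
      using ratio[OF \<delta>pos] by blast
    have "\<forall>\<^sub>F n in sequentially. norm (v n) > L - \<kappa>"
      using limn \<kappa>0 by (intro order_tendstoD(1)) auto
    then show ?thesis
    proof (rule eventually_mono)
      fix n assume "norm (v n) > L - \<kappa>"
      show "\<bar>a n - b n\<bar> < \<delta>"
      proof (rule ccontr)
        assume "\<not> \<bar>a n - b n\<bar> < \<delta>"
        then have "norm (G (a n) - G (b n)) / \<bar>a n - b n\<bar> \<le> L - \<kappa>" using rb pa(2)[of n] qb(2)[of n] by simp
        then show False using \<open>norm (v n) > L - \<kappa>\<close> nv[of n] by linarith
      qed
    qed
  qed
  have "\<forall>\<^sub>F n in sequentially. dist (v n) y < 1/100"
    using limv by (intro tendstoD) auto
  then obtain N where N: "\<And>n. n \<ge> N \<Longrightarrow> dist (v n) y < 1/100"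
    unfolding eventually_sequentially by blast
  define lN where "lN = \<bar>a N - b N\<bar>"
  have lN0: "lN > 0" using ab[of N] unfolding lN_def by simp
  from small[of "lN / 8"] lN0 obtain N2 where N2: "\<And>n. n \<ge> N2 \<Longrightarrow> \<bar>a n - b n\<bar> < lN / 8"
    unfolding eventually_sequentially by auto
  define m where "m = max N N2"
  have m8: "8 * \<bar>a m - b m\<bar> \<le> \<bar>a N - b N\<bar>" using N2[of m] unfolding m_def lN_def by simp
  have m1: "\<bar>a m - b m\<bar> \<le> 1" using pa(2)[of m] qb(2)[of m] by auto
  obtain x where x: "1/20 \<le> \<bar>(vec (a N) x - vec (b N) x) / \<bar>a N - b N\<bar> - (vec (a m) x - vec (b m) x) / \<bar>a m - b m\<bar>\<bar>"
    using core[OF ab[of N] ab[of m] m1 m8] by blast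
  have close: "\<bar>apply_bcontfun (v n) x - (vec (a n) x - vec (b n) x) / \<bar>a n - b n\<bar>\<bar> \<le> 1/100" for n
  proof -
    define H where "H = (fv (a n) - G (a n)) - (fv (b n) - G (b n))"
    have l0: "\<bar>a n - b n\<bar> > 0" using ab[of n] by simp
    have "\<bar>apply_bcontfun H x\<bar> \<le> norm H" using norm_bounded[of H x] by simp
    also have "\<dots> \<le> 1/100 * \<bar>a n - b n\<bar>" unfolding H_def by (rule hG[OF pa(2) qb(2)])
    finally have hx: "\<bar>apply_bcontfun H x\<bar> / \<bar>a n - b n\<bar> \<le> 1/100" using l0 by (simp add: divide_le_eq)
    have "apply_bcontfun (v n) x = ((vec (a n) x - vec (b n) x) - apply_bcontfun H x) / \<bar>a n - b n\<bar>"
      unfolding v_def H_def by (simp add: divide_inverse mult.commute)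
    then have "apply_bcontfun (v n) x - (vec (a n) x - vec (b n) x) / \<bar>a n - b n\<bar> = - (apply_bcontfun H x / \<bar>a n - b n\<bar>)"
      by (simp add: diff_divide_distrib)
    then show ?thesis using hx by (simp add: abs_divide)
  qed
  have "\<bar>apply_bcontfun (v N) x - apply_bcontfun (v m) x\<bar> \<ge> 1/20 - 2/100"
    using close[of N] close[of m] x by linarith
  moreover have "\<bar>apply_bcontfun (v N) x - apply_bcontfun (v m) x\<bar> \<le> norm (v N - v m)"
    using norm_bounded[of "v N - v m" x] by simp
  moreover have "norm (v N - v m) \<le> dist (v N) y + dist (v m) y"
    using dist_triangle[of "v N" "v m" y] dist_commute[of y "v m"] by (simp only: dist_norm)
  moreover have "dist (v N) y < 1/100" "dist (v m) y < 1/100" using N unfolding m_def by auto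
  ultimately show False by linarith
qed



lemma f0_lip: "\<forall>P\<in>SS. \<forall>Q\<in>SS. norm (f0 P - f0 Q) \<le> 1 * dist P Q"
proof (intro ballI)
  fix P Q assume P: "P \<in> SS" and Q: "Q \<in> SS"
  then obtain p q where "P = emb p" "p \<in> {0..1}" "Q = emb q" "q \<in> {0..1}" by (auto elim!: SS_cases)
  then show "norm (f0 P - f0 Q) \<le> 1 * dist P Q" using fv_lip by simp
qed

lemma not_dense: "\<not> A_dense MM (emb 0) (UNIV :: (real \<Rightarrow>\<^sub>C real) set)"
proof
  assume H: "A_dense MM (emb 0) (UNIV :: (real \<Rightarrow>\<^sub>C real) set)"
  have l0: "lip0 MM (emb 0) UNIV f0"
    unfolding lip0_def using f0_lip by (auto simp: fv_0 intro!: exI[of _ 1])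
  have all: "\<forall>e>0. \<exists>g\<in>Aset MM (emb 0) UNIV. lipnorm MM (\<lambda>x. f0 x - g x) < e"
    using mp[OF spec[OF H[unfolded A_dense_def], of f0] l0] .
  have e0: "(1/100::real) > 0" by simp
  from all e0 have "\<exists>g\<in>Aset MM (emb 0) UNIV. lipnorm MM (\<lambda>x. f0 x - g x) < 1/100" by blast
  then obtain g where g: "g \<in> Aset MM (emb 0) UNIV" and d: "lipnorm MM (\<lambda>x. f0 x - g x) < 1/100"
    by blast
  from g obtain K y where gK: "\<forall>P\<in>SS. \<forall>Q\<in>SS. norm (g P - g Q) \<le> K * dist P Q"
    and att: "attains_toward MM g y"
    unfolding Aset_def lip0_def by auto
  have hK: "\<forall>P\<in>SS. \<forall>Q\<in>SS. norm ((f0 P - g P) - (f0 Q - g Q)) \<le> (1 + K) * dist P Q"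
  proof (intro ballI)
    fix P Q assume P: "P \<in> SS" and Q: "Q \<in> SS"
    have eq: "(f0 P - g P) - (f0 Q - g Q) = (f0 P - f0 Q) - (g P - g Q)" by simp
    have "norm ((f0 P - g P) - (f0 Q - g Q)) \<le> norm (f0 P - f0 Q) + norm (g P - g Q)"
      unfolding eq by (rule norm_triangle_ineq4)
    also have "\<dots> \<le> 1 * dist P Q + K * dist P Q" using f0_lip gK P Q by (intro add_mono) auto
    finally show "norm ((f0 P - g P) - (f0 Q - g Q)) \<le> (1 + K) * dist P Q" by (simp add: algebra_simps)
  qed
  have hb: "\<forall>P\<in>SS. \<forall>Q\<in>SS. norm ((f0 P - g P) - (f0 Q - g Q)) \<le> 1/100 * dist P Q"
  proof (intro ballI)
    fix P Q assume P: "P \<in> SS" and Q: "Q \<in> SS"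
    have "norm ((f0 P - g P) - (f0 Q - g Q)) \<le> lipnorm MM (\<lambda>x. f0 x - g x) * dist P Q"
      using lipnorm_bound_MM[of "\<lambda>x. f0 x - g x", OF hK P Q] by simp
    also have "\<dots> \<le> 1/100 * dist P Q" using d by (intro mult_right_mono) auto
    finally show "norm ((f0 P - g P) - (f0 Q - g Q)) \<le> 1/100 * dist P Q" .
  qed
  show False by (rule no_attain[OF gK hb att])
qed

theorem corollary3p6:
  shows "\<exists>(M :: (real \<Rightarrow>\<^sub>C real) metric) (z :: real \<Rightarrow>\<^sub>C real) (Y :: (real \<Rightarrow>\<^sub>C real) set).
           z \<in> mspace M \<and> mcomplete_of M \<and> \<not> is_normed_space_metric M \<and>
           subspace Y \<and> closed Y \<and> \<not> A_dense M z Y"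
proof (intro exI conjI)
  show "emb 0 \<in> mspace MM" using emb_SS[of 0] by simp
  show "mcomplete_of MM" by (rule mcomplete_MM)
  show "\<not> is_normed_space_metric MM" by (rule not_normed_MM)
  show "subspace (UNIV :: (real \<Rightarrow>\<^sub>C real) set)" by (rule subspace_UNIV)
  show "closed (UNIV :: (real \<Rightarrow>\<^sub>C real) set)" by simp
  show "\<not> A_dense MM (emb 0) (UNIV :: (real \<Rightarrow>\<^sub>C real) set)" by (rule not_dense)
qed


end
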